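(* For every $d\geq 1$, $m(\ell_2^d)=d+1$, where $\ell_2^d$ is $\mathbb{R}^d$ with the Euclidean norm.
   Context: For a set $S$ in a normed space, its midpoint set is $M(S)=\{\tfrac12(x+y): x,y\in S,\ x\neq y\}$. A set $S$ is an M-set if every vector in $M(S)$ has norm exactly $1$ and every vector in $S$ has norm strictly greater than $1$. $m(X)$ denotes the largest cardinality of an M-set in the normed space $X$ if such a largest finite cardinality exists, and $m(X)=\infty$ otherwise. *)

theory Defs
  imports "HOL-Analysis.Analysis" "HOL-Library.Extended_Nat"
begin

definition midpoint_set :: "'a::real_normed_vector set \<Rightarrow> 'a set" where
  "midpoint_set S = {(1/2) *\<^sub>R (x + y) | x y. x \<in> S \<and> y \<in> S \<and> x \<noteq> y}"

definition M_set :: "'a::real_normed_vector set \<Rightarrow> bool" where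
  "M_set S \<longleftrightarrow> (\<forall>v\<in>midpoint_set S. norm v = 1) \<and> (\<forall>x\<in>S. norm x > 1)"

text \<open>A largest finite cardinality exists iff all M-sets are finite with
  uniformly bounded cardinality (the empty set is always an M-set).\<close>
definition m_space :: "'a::real_normed_vector itself \<Rightarrow> enat" where
  "m_space (_::'a itself) =
     (if \<exists>N::nat. \<forall>S::'a set. M_set S \<longrightarrow> finite S \<and> card S \<le> N
      then enat (Max {card S | S::'a set. M_set S})
      else \<infinity>)"

end

theory Submission imports Defs begin
lemma Mset_ip:
  fixes S :: "'a::real_inner set"
  assumes M: "M_set S" and z: "z \<in> S" and w: "w \<in> S"
  shows "inner z w = 2 - (inner z z + inner w w)/2 + (if z = w then 2 * inner z z - 2 else 0)"
proof (cases "z = w")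
  case True then show ?thesis by simp
next
  case False
  have "(1/2) *\<^sub>R (z + w) \<in> midpoint_set S"
    unfolding midpoint_set_def using z w False by blast
  then have "norm ((1/2) *\<^sub>R (z + w)) = 1" using M unfolding M_set_def by blast
  then have "norm (z + w) = 2" by simp
  then have "inner (z + w) (z + w) = 4" by (metis norm_eq_sqrt_inner real_sqrt_eq_iff real_sqrt_four)
  then have "inner z z + inner w w + 2 * inner z w = 4"
    by (simp add: inner_add_left inner_add_right inner_commute)
  then show ?thesis using False by (simp add: field_simps)
qed

lemma key:
  fixes S :: "'a::real_inner set"
  assumes M: "M_set S" and fin: "finite S"
  shows "\<not> affine_dependent S"
proof
  assume "affine_dependent S"
  then obtain U v where U0: "sum U S = 0" and v: "v \<in> S" "U v \<noteq> 0"
    and V0: "sum (\<lambda>w. U w *\<^sub>R w) S = 0"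
    unfolding affine_dependent_explicit_finite[OF fin] by blast
  define n where "n z = inner z z" for z :: 'a
  define V where "V = sum (\<lambda>w. U w *\<^sub>R w) S"
  define K where "K = sum (\<lambda>w. U w * n w) S"
  have iz: "inner z V = - K/2 + U z * (2 * n z - 2)" if z: "z \<in> S" for z
  proof -
    have "inner z V = sum (\<lambda>w. U w * inner z w) S"
      unfolding V_def by (simp add: inner_sum_right)
    also have "\<dots> = sum (\<lambda>w. 2 * U w - n z / 2 * U w - (U w * n w)/2
                 + (if w = z then U z * (2 * n z - 2) else 0)) S"
    proof (rule sum.cong[OF refl])
      fix w assume w: "w \<in> S"
      have e: "inner z w = 2 - (n z + n w)/2 + (if z = w then 2 * n z - 2 else 0)"
        using Mset_ip[OF M z w] unfolding n_def .
      show "U w * inner z w = 2 * U w - n z / 2 * U w - (U w * n w)/2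
                 + (if w = z then U z * (2 * n z - 2) else 0)"
        unfolding e by (cases "w = z") (simp_all add: algebra_simps)
    qed
    also have "\<dots> = 2 * sum U S - n z / 2 * sum U S - K/2 + U z * (2 * n z - 2)"
      unfolding K_def using z fin
      by (simp add: sum.distrib sum_subtractf sum_distrib_left sum_divide_distrib[symmetric])
    finally show ?thesis using U0 by simp
  qed
  have "inner V V = sum (\<lambda>z. U z * inner z V) S"
    unfolding V_def[of] by (simp add: inner_sum_left)
  also have "\<dots> = sum (\<lambda>z. U z * (-K/2) + (U z)^2 * (2 * n z - 2)) S"
    by (rule sum.cong[OF refl]) (simp add: iz power2_eq_square algebra_simps)
  also have "\<dots> = sum (\<lambda>z. (U z)^2 * (2 * n z - 2)) S"
  proof -
    have "sum (\<lambda>z. U z * (-K/2)) S = 0"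
      using sum_distrib_right[of U S "-K/2"] U0 by simp
    then show ?thesis by (simp only: sum.distrib)
  qed
  finally have S1: "inner V V = sum (\<lambda>z. (U z)^2 * (2 * n z - 2)) S" .
  have "V = 0" unfolding V_def by (rule V0)
  then have S0: "sum (\<lambda>z. (U z)^2 * (2 * n z - 2)) S = 0"
    using S1 by simp
  have pos: "n z > 1" if "z \<in> S" for z
  proof -
    have "\<forall>x\<in>S. norm x > 1" using M unfolding M_set_def by (rule conjunct2)
    then have "norm z > 1" using that by blast
    then have "norm z ^ 2 > 1" by (simp add: one_less_power)
    then show ?thesis unfolding n_def by (simp add: power2_norm_eq_inner)
  qed
  have nn: "\<forall>z\<in>S. (U z)^2 * (2 * n z - 2) \<ge> 0"
  proof
    fix z assume "z \<in> S"
    then have "2 * n z - 2 \<ge> 0" using pos[of z] by linarith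
    then show "(U z)^2 * (2 * n z - 2) \<ge> 0" by (rule mult_nonneg_nonneg[OF zero_le_power2])
  qed
  then have "(U v)^2 * (2 * n v - 2) = 0"
    using sum_nonneg_eq_0_iff[OF fin, of "\<lambda>z. (U z)^2 * (2 * n z - 2)"] S0 v(1) by auto
  moreover have "(U v)^2 * (2 * n v - 2) > 0" 
  proof (rule mult_pos_pos)
    show "(U v)^2 > 0" using v(2) by simp
    show "2 * n v - 2 > 0" using pos[OF v(1)] by linarith
  qed
  ultimately show False by linarith
qed

lemma M_set_subset:
  assumes "M_set S" "T \<subseteq> S" shows "M_set T"
  using assms unfolding M_set_def midpoint_set_def by blast

lemma ub:
  fixes S :: "(real^'d) set"
  assumes M: "M_set S"
  shows "finite S \<and> card S \<le> CARD('d) + 1"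
proof -
  have fin: "finite S"
  proof (rule ccontr)
    assume "infinite S"
    then obtain T where T: "T \<subseteq> S" "finite T" "card T = CARD('d) + 2"
      using infinite_arbitrarily_large by blast
    have "affine_dependent T"
      by (rule affine_dependent_biggerset) (use T in simp_all)
    moreover have "\<not> affine_dependent T"
      by (rule key[OF M_set_subset[OF M T(1)] T(2)])
    ultimately show False by blast
  qed
  moreover have "card S \<le> CARD('d) + 1"
  proof (rule ccontr)
    assume "\<not> card S \<le> CARD('d) + 1"
    then have "affine_dependent S"
      by (intro affine_dependent_biggerset) (use fin in simp_all)
    with key[OF M fin] show False by blast
  qed
  ultimately show ?thesis by blast
qed

lemma M_setI:
  fixes S :: "'a::real_inner set"
  assumes "\<And>x y. x \<in> S \<Longrightarrow> y \<in> S \<Longrightarrow> x \<noteq> y \<Longrightarrow> inner (x + y) (x + y) = 4"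
    and "\<And>x. x \<in> S \<Longrightarrow> inner x x > 1"
  shows "M_set S"
  unfolding M_set_def
proof (intro conjI ballI)
  fix v assume "v \<in> midpoint_set S"
  then obtain x y where xy: "x \<in> S" "y \<in> S" "x \<noteq> y" "v = (1/2) *\<^sub>R (x + y)"
    unfolding midpoint_set_def by blast
  have "inner v v = 1" using assms(1)[OF xy(1-3)] unfolding xy(4) by simp
  then show "norm v = 1" by (simp add: norm_eq_sqrt_inner)
next
  fix x assume "x \<in> S"
  then have "inner x x > 1" by (rule assms(2))
  then show "norm x > 1" by (simp add: norm_eq_sqrt_inner)
qed

lemma sum_if_eq: "(\<Sum>j\<in>(UNIV::'d::finite set). (if j = i then a else 0) + b) = a + b * real CARD('d)"
  by (simp add: sum.distrib)

lemma construction: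
  "\<exists>S::(real^'d) set. M_set S \<and> card S = CARD('d) + 1"
proof -
  define dd where "dd = real CARD('d)"
  define s where "s = sqrt 2"
  define t where "t = sqrt (2 + 2 * dd)"
  define c where "c = - (s + t) / dd"
  have dd: "dd \<ge> 1" unfolding dd_def by (simp add: Suc_le_eq)
  have s2: "s^2 = 2" unfolding s_def by simp
  have t2: "t^2 = 2 + 2 * dd" unfolding t_def using dd by (simp add: real_sqrt_pow2)
  have s0: "s > 0" unfolding s_def by simp
  have t0: "t \<ge> 0" unfolding t_def using dd by simp
  have c0: "c < 0" unfolding c_def using dd s0 t0 by (simp add: field_simps)
  have eqc: "dd * c^2 + 2 * s * c = 2"
  proof -
    have "dd * c^2 + 2 * s * c = ((s + t)^2 - 2 * s * (s + t)) / dd"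
      unfolding c_def using dd by (simp add: field_simps power2_eq_square)
    also have "\<dots> = (t^2 - s^2) / dd" by (simp add: power2_eq_square algebra_simps)
    also have "\<dots> = 2" using dd by (simp add: s2 t2)
    finally show ?thesis .
  qed
  have cbig: "dd * c^2 > 1"
  proof -
    have "dd * c^2 = (s + t)^2 / dd"
      unfolding c_def using dd by (simp add: field_simps power2_eq_square)
    moreover have "(s + t)^2 \<ge> t^2" using s0 t0 by (simp add: power_mono)
    ultimately have "dd * (dd * c^2) > dd * 1" using dd t2 by (simp add: field_simps)
    then show ?thesis using dd by simp
  qed
  define e :: "'d \<Rightarrow> real^'d" where "e i = (\<chi> j. if j = i then s else 0)" for i
  define u :: "real^'d" where "u = (\<chi> j. c)"
  define S where "S = insert u (range e)"
  have inj: "inj e"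
  proof (rule injI)
    fix i k assume "e i = e k"
    then have "e i $ i = e k $ i" by simp
    then show "i = k" unfolding e_def using s0 by (auto split: if_splits)
  qed
  have notin: "u \<notin> range e"
  proof
    assume "u \<in> range e"
    then obtain i where "u = e i" by blast
    then have "u $ i = e i $ i" by simp
    then show False unfolding u_def e_def using s0 c0 by simp
  qed
  have card: "card S = CARD('d) + 1"
    unfolding S_def using notin card_image[OF inj] by simp
  have ee: "inner (e i + e k) (e i + e k) = 4" if "i \<noteq> k" for i k
  proof -
    have "inner (e i + e k) (e i + e k) = (\<Sum>j\<in>UNIV. (if j = i then s^2 else 0) + (if j = k then s^2 else 0))"
      unfolding inner_vec_def e_def using that by (intro sum.cong) (auto simp: power2_eq_square)
    also have "\<dots> = 4" by (simp add: sum.distrib s2)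
    finally show ?thesis .
  qed
  have eu: "inner (e i + u) (e i + u) = 4" for i
  proof -
    have "inner (e i + u) (e i + u) = (\<Sum>j\<in>UNIV. (if j = i then s^2 + 2 * s * c else 0) + c^2)"
      unfolding inner_vec_def e_def u_def by (intro sum.cong) (auto simp: power2_eq_square algebra_simps)
    also have "\<dots> = s^2 + 2 * s * c + c^2 * dd" unfolding dd_def by (rule sum_if_eq)
    also have "\<dots> = 4" using eqc s2 by (simp add: algebra_simps)
    finally show ?thesis .
  qed
  have e1: "inner (e i) (e i) > 1" for i
  proof -
    have "inner (e i) (e i) = (\<Sum>j\<in>UNIV. (if j = i then s^2 else 0))"
      unfolding inner_vec_def e_def by (intro sum.cong) (auto simp: power2_eq_square)
    also have "\<dots> = 2" by (simp add: s2)
    finally show ?thesis by simp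
  qed
  have u1: "inner u u > 1"
  proof -
    have "inner u u = (\<Sum>j\<in>(UNIV::'d set). c^2)"
      unfolding inner_vec_def u_def by (simp add: power2_eq_square)
    also have "\<dots> = dd * c^2" unfolding dd_def by simp
    finally show ?thesis using cbig by simp
  qed
  have "M_set S"
  proof (rule M_setI)
    fix x y assume "x \<in> S" "y \<in> S" "x \<noteq> y"
    then show "inner (x + y) (x + y) = 4"
      unfolding S_def using ee eu by (auto simp: add.commute) (metis ee)
  next
    fix x assume "x \<in> S"
    then show "inner x x > 1" unfolding S_def using e1 u1 by auto
  qed
  with card show ?thesis by blast
qed

theorem theorem6:
  shows "m_space TYPE(real ^ 'd) = enat (CARD('d) + 1)"
proof -
  have all: "\<forall>S::(real^'d) set. M_set S \<longrightarrow> finite S \<and> card S \<le> CARD('d) + 1"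
    using ub by blast
  then have ex: "\<exists>N::nat. \<forall>S::(real^'d) set. M_set S \<longrightarrow> finite S \<and> card S \<le> N" by blast
  obtain S0 :: "(real^'d) set" where S0: "M_set S0" "card S0 = CARD('d) + 1"
    using construction by blast
  have "Max {card S | S::(real^'d) set. M_set S} = CARD('d) + 1"
  proof (rule Max_eqI)
    show "finite {card S | S::(real^'d) set. M_set S}"
      by (rule finite_subset[of _ "{..CARD('d) + 1}"]) (use all in auto)
    show "y \<le> CARD('d) + 1" if "y \<in> {card S | S::(real^'d) set. M_set S}" for y
      using that all by auto
    show "CARD('d) + 1 \<in> {card S | S::(real^'d) set. M_set S}"
      using S0 by force
  qed
  then show ?thesis unfolding m_space_def using ex by simp
qed

end
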